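(* The following two statements are equivalent: (i) For every finite simple undirected graph $G$, the complete graph $K_{\chi(G)}$ is a minor of $G$. (ii) For every finite simple undirected graph $G$ that is not complete, there is a minor $M$ of $G$ such that $M \not\cong G$ and there is a graph homomorphism $G \to M$.
   Context: Graphs are simple and undirected: $G=(V,E)$ with $E \subseteq \{\{x,y\}: x,y\in V,\ x\neq y\}$. $\chi(G)$ denotes the chromatic number of $G$, i.e. the least cardinal $\lambda$ such that there is a graph homomorphism $G \to K_\lambda$; $K_\alpha$ is the complete graph on $\alpha$ vertices. Disjoint sets $S,T\subseteq V(G)$ are connected to each other if there are $s\in S$, $t\in T$ with $\{s,t\}\in E(G)$. For a collection $\mathcal D$ of pairwise disjoint, nonempty subsets of $V(G)$, each inducing a connected subgraph, let $G(\mathcal D)$ be the graph with vertex set $\mathcal D$ in which distinct $d,e\in\mathcal D$ are adjacent iff $d$ and $e$ are connected to each other. A graph $M$ is a minor of $G$ if there is such a collection $\mathcal D$ and an injective graph homomorphism $M \to G(\mathcal D)$. *)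

theory Defs
  imports Main
begin

definition simple_graph :: "'a set \<Rightarrow> 'a set set \<Rightarrow> bool" where
  "simple_graph V E \<longleftrightarrow> E \<subseteq> {{x, y} | x y. x \<in> V \<and> y \<in> V \<and> x \<noteq> y}"

definition finite_graph :: "'a set \<Rightarrow> 'a set set \<Rightarrow> bool" where
  "finite_graph V E \<longleftrightarrow> simple_graph V E \<and> finite V"

definition graph_hom :: "'a set \<Rightarrow> 'a set set \<Rightarrow> 'b set \<Rightarrow> 'b set set \<Rightarrow> ('a \<Rightarrow> 'b) \<Rightarrow> bool" where
  "graph_hom V E V' E' f \<longleftrightarrow> f ` V \<subseteq> V' \<and> (\<forall>x y. {x, y} \<in> E \<longrightarrow> {f x, f y} \<in> E')"

definition graph_iso :: "'a set \<Rightarrow> 'a set set \<Rightarrow> 'b set \<Rightarrow> 'b set set \<Rightarrow> bool" where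
  "graph_iso V E V' E' \<longleftrightarrow> (\<exists>f. bij_betw f V V' \<and>
      (\<forall>x\<in>V. \<forall>y\<in>V. {x, y} \<in> E \<longleftrightarrow> {f x, f y} \<in> E'))"

definition K_verts :: "nat \<Rightarrow> nat set" where
  "K_verts n = {..<n}"

definition K_edges :: "nat \<Rightarrow> nat set set" where
  "K_edges n = {{x, y} | x y. x < n \<and> y < n \<and> x \<noteq> y}"

definition complete_graph :: "'a set \<Rightarrow> 'a set set \<Rightarrow> bool" where
  "complete_graph V E \<longleftrightarrow> (\<forall>x\<in>V. \<forall>y\<in>V. x \<noteq> y \<longrightarrow> {x, y} \<in> E)"

definition chromatic_number :: "'a set \<Rightarrow> 'a set set \<Rightarrow> nat" where
  "chromatic_number V E = (LEAST n. \<exists>f. graph_hom V E (K_verts n) (K_edges n) f)"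

definition induces_connected :: "'a set set \<Rightarrow> 'a set \<Rightarrow> bool" where
  "induces_connected E S \<longleftrightarrow>
     (\<forall>x\<in>S. \<forall>y\<in>S. (x, y) \<in> {(u, v). u \<in> S \<and> v \<in> S \<and> {u, v} \<in> E}\<^sup>*)"

definition connected_to :: "'a set set \<Rightarrow> 'a set \<Rightarrow> 'a set \<Rightarrow> bool" where
  "connected_to E S T \<longleftrightarrow> (\<exists>s\<in>S. \<exists>t\<in>T. {s, t} \<in> E)"

definition branch_sets :: "'a set \<Rightarrow> 'a set set \<Rightarrow> 'a set set \<Rightarrow> bool" where
  "branch_sets V E D \<longleftrightarrow>
     (\<forall>d\<in>D. d \<noteq> {} \<and> d \<subseteq> V \<and> induces_connected E d) \<and>
     (\<forall>d\<in>D. \<forall>e\<in>D. d \<noteq> e \<longrightarrow> d \<inter> e = {})"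

definition contr_edges :: "'a set set \<Rightarrow> 'a set set \<Rightarrow> 'a set set set" where
  "contr_edges E D = {{d, e} | d e. d \<in> D \<and> e \<in> D \<and> d \<noteq> e \<and> connected_to E d e}"

definition is_minor :: "'b set \<Rightarrow> 'b set set \<Rightarrow> 'a set \<Rightarrow> 'a set set \<Rightarrow> bool" where
  "is_minor VM EM V E \<longleftrightarrow> (\<exists>D f. branch_sets V E D \<and>
       graph_hom VM EM D (contr_edges E D) f \<and> inj_on f VM)"

end

theory Submission
  imports Defs
begin


lemma connected_to_sym: "connected_to E a b \<Longrightarrow> connected_to E b a"
  unfolding connected_to_def by (metis insert_commute)

lemma contr_edgesD:
  "{a,b} \<in> contr_edges E D \<Longrightarrow> a \<in> D \<and> b \<in> D \<and> a \<noteq> b \<and> connected_to E a b"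
  unfolding contr_edges_def
  by (auto simp: doubleton_eq_iff dest: connected_to_sym)

lemma contr_edgesI:
  "a \<in> D \<Longrightarrow> b \<in> D \<Longrightarrow> a \<noteq> b \<Longrightarrow> connected_to E a b \<Longrightarrow> {a,b} \<in> contr_edges E D"
  unfolding contr_edges_def by blast

lemma K_edgesD: "{i,j} \<in> K_edges n \<Longrightarrow> i < n \<and> j < n \<and> i \<noteq> j"
  by (auto simp: K_edges_def doubleton_eq_iff)

lemma K_edgesI: "i < n \<Longrightarrow> j < n \<Longrightarrow> i \<noteq> j \<Longrightarrow> {i,j} \<in> K_edges n"
  by (auto simp: K_edges_def)

lemma simpleD: "simple_graph V E \<Longrightarrow> e \<in> E \<Longrightarrow> \<exists>x y. e = {x,y} \<and> x \<in> V \<and> y \<in> V \<and> x \<noteq> y"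
  unfolding simple_graph_def by blast

lemma simple_edgeD: "simple_graph V E \<Longrightarrow> {x,y} \<in> E \<Longrightarrow> x \<in> V \<and> y \<in> V \<and> x \<noteq> y"
  unfolding simple_graph_def by (auto simp: doubleton_eq_iff)

lemma finite_edges: "finite_graph V E \<Longrightarrow> finite E"
proof -
  assume a: "finite_graph V E"
  have "E \<subseteq> Pow V" using a unfolding finite_graph_def simple_graph_def by blast
  moreover have "finite (Pow V)" using a unfolding finite_graph_def by simp
  ultimately show ?thesis by (rule finite_subset)
qed

lemma hom_to_K_card:
  assumes "finite_graph V E"
  shows "\<exists>f. graph_hom V E (K_verts (card V)) (K_edges (card V)) f"
proof -
  have fin: "finite V" and sg: "simple_graph V E" using assms unfolding finite_graph_def by auto
  obtain h where h: "bij_betw h V {0..<card V}" using ex_bij_betw_finite_nat[OF fin] by blast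
  have "graph_hom V E (K_verts (card V)) (K_edges (card V)) h"
    unfolding graph_hom_def
  proof safe
    fix x assume "x \<in> V" then show "h x \<in> K_verts (card V)" using h
      unfolding K_verts_def bij_betw_def by auto
  next
    fix x y assume "{x,y} \<in> E"
    then have "x \<in> V" "y \<in> V" "x \<noteq> y" using simple_edgeD[OF sg] by auto
    then show "{h x, h y} \<in> K_edges (card V)" using h
      unfolding bij_betw_def inj_on_def by (auto intro!: K_edgesI)
  qed
  then show ?thesis by blast
qed

lemma chrom_le: "graph_hom V E (K_verts m) (K_edges m) f \<Longrightarrow> chromatic_number V E \<le> m"
  unfolding chromatic_number_def by (rule Least_le) blast

lemma chrom_hom: "finite_graph V E \<Longrightarrow>
   \<exists>f. graph_hom V E (K_verts (chromatic_number V E)) (K_edges (chromatic_number V E)) f"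
proof -
  assume a: "finite_graph V E"
  obtain f where "graph_hom V E (K_verts (card V)) (K_edges (card V)) f" using hom_to_K_card[OF a] by blast
  then show ?thesis unfolding chromatic_number_def using LeastI_ex[of "\<lambda>n. \<exists>f. graph_hom V E (K_verts n) (K_edges n) f"] by blast
qed

lemma chrom_le_card: "finite_graph V E \<Longrightarrow> chromatic_number V E \<le> card V"
  using hom_to_K_card chrom_le by blast

lemma chrom_lt_card:
  assumes "finite_graph V E" "\<not> complete_graph V E"
  shows "chromatic_number V E < card V"
proof -
  have fin: "finite V" and sg: "simple_graph V E" using assms unfolding finite_graph_def by auto
  obtain x y where xy: "x \<in> V" "y \<in> V" "x \<noteq> y" "{x,y} \<notin> E"
    using assms(2) unfolding complete_graph_def by blast
  have fin': "finite (V - {y})" using fin by simp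
  obtain g where g: "bij_betw g (V - {y}) {0..<card (V - {y})}"
    using ex_bij_betw_finite_nat[OF fin'] by blast
  have cV: "card (V - {y}) = card V - 1" using fin xy by simp
  have c2: "card V \<ge> 2"
  proof -
    have "{x,y} \<subseteq> V" using xy by auto
    then have "card {x,y} \<le> card V" using fin by (rule card_mono[rotated])
    then show ?thesis using xy by simp
  qed
  define f where "f v = (if v = y then g x else g v)" for v
  have gi: "inj_on g (V - {y})" and gim: "g ` (V - {y}) = {0..<card V - 1}"
    using g cV unfolding bij_betw_def by auto
  have "graph_hom V E (K_verts (card V - 1)) (K_edges (card V - 1)) f"
    unfolding graph_hom_def
  proof safe
    fix v assume "v \<in> V" then show "f v \<in> K_verts (card V - 1)"
      using gim xy unfolding K_verts_def f_def by auto
  next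
    fix a b assume e: "{a,b} \<in> E"
    then have ab: "a \<in> V" "b \<in> V" "a \<noteq> b" using simple_edgeD[OF sg] by auto
    have r: "v \<in> V - {y} \<Longrightarrow> g v < card V - 1" for v using gim by auto
    have "f a \<noteq> f b"
    proof
      assume eq: "f a = f b"
      show False
      proof (cases "a = y")
        case True
        then have "b \<noteq> y" using ab by auto
        then have "g x = g b" using eq True unfolding f_def by simp
        then have "x = b" using inj_onD[OF gi, of x b] xy ab \<open>b \<noteq> y\<close> by blast
        then show False using e True xy by (simp add: insert_commute)
      next
        case False
        show False
        proof (cases "b = y")
          case True
          then have "g x = g a" using eq False unfolding f_def by simp
          then have "x = a" using inj_onD[OF gi, of x a] xy ab False by blast
          then show False using e True xy by simp
        next
          case False2: False
          then have "g a = g b" using eq False unfolding f_def by simp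
          then show False using inj_onD[OF gi, of a b] ab False False2 by blast
        qed
      qed
    qed
    moreover have "f a < card V - 1" "f b < card V - 1"
      using r xy ab unfolding f_def by auto
    ultimately show "{f a, f b} \<in> K_edges (card V - 1)" by (auto intro!: K_edgesI)
  qed
  then have "chromatic_number V E \<le> card V - 1" by (rule chrom_le)
  then show ?thesis using c2 by simp
qed

lemma hom_comp: "graph_hom V E V' E' f \<Longrightarrow> graph_hom V' E' V'' E'' g \<Longrightarrow> graph_hom V E V'' E'' (g \<circ> f)"
  unfolding graph_hom_def image_subset_iff by auto

lemma K_minor_mono: "k \<le> m \<Longrightarrow> is_minor (K_verts m) (K_edges m) V E \<Longrightarrow> is_minor (K_verts k) (K_edges k) V E"
  unfolding is_minor_def graph_hom_def K_verts_def
  apply (elim exE conjE)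
  apply (rule_tac x=D in exI, rule_tac x=f in exI)
  apply (auto dest!: K_edgesD intro: inj_on_subset)
  apply (meson K_edgesI less_le_trans)
  done

lemma complete_K_minor:
  assumes "finite_graph V E" "complete_graph V E"
  shows "is_minor (K_verts (card V)) (K_edges (card V)) V E"
proof -
  have fin: "finite V" using assms unfolding finite_graph_def by auto
  obtain g where g: "bij_betw g {0..<card V} V" using ex_bij_betw_nat_finite[OF fin] by blast
  have gi: "inj_on g {0..<card V}" and gim: "g ` {0..<card V} = V" using g unfolding bij_betw_def by auto
  define D where "D = (\<lambda>v. {v}) ` V"
  have "branch_sets V E D"
    unfolding branch_sets_def D_def induces_connected_def by auto
  moreover have "graph_hom (K_verts (card V)) (K_edges (card V)) D (contr_edges E D) (\<lambda>i. {g i})"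
    unfolding graph_hom_def
  proof safe
    fix i assume "i \<in> K_verts (card V)" then show "{g i} \<in> D" using gim unfolding D_def K_verts_def by auto
  next
    fix i j assume "{i,j} \<in> K_edges (card V)"
    then have ij: "i < card V" "j < card V" "i \<noteq> j" using K_edgesD by auto
    have "g i \<in> V" "g j \<in> V" using gim ij by auto
    have "g i \<noteq> g j" using ij inj_onD[OF gi, of i j] by auto
    then have "{g i, g j} \<in> E" using assms(2) \<open>g i \<in> V\<close> \<open>g j \<in> V\<close> unfolding complete_graph_def by blast
    then show "{{g i}, {g j}} \<in> contr_edges E D"
      using \<open>g i \<noteq> g j\<close> \<open>g i \<in> V\<close> \<open>g j \<in> V\<close>
      by (intro contr_edgesI) (auto simp: D_def connected_to_def)
  qed
  moreover have "inj_on (\<lambda>i. {g i}) (K_verts (card V))"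
    using gi unfolding inj_on_def K_verts_def by (simp add: inj_on_def)
  ultimately show ?thesis unfolding is_minor_def by blast
qed



lemma conn_lift:
  assumes "X \<subseteq> Y" "(x,y) \<in> {(u,v). u \<in> X \<and> v \<in> X \<and> {u,v} \<in> E}\<^sup>*"
  shows "(x,y) \<in> {(u,v). u \<in> Y \<and> v \<in> Y \<and> {u,v} \<in> E}\<^sup>*"
proof -
  have "{(u,v). u \<in> X \<and> v \<in> X \<and> {u,v} \<in> E} \<subseteq> {(u,v). u \<in> Y \<and> v \<in> Y \<and> {u,v} \<in> E}"
    using assms(1) by auto
  then show ?thesis using assms(2) rtrancl_mono by blast
qed

lemma minor_trans:
  assumes m1: "is_minor A B VM EM" and m2: "is_minor VM EM V E"
  shows "is_minor A B V E"
proof -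
  obtain D1 f1 where bs1: "branch_sets V E D1" and h1: "graph_hom VM EM D1 (contr_edges E D1) f1"
    and i1: "inj_on f1 VM" using m2 unfolding is_minor_def by blast
  obtain D2 f2 where bs2: "branch_sets VM EM D2" and h2: "graph_hom A B D2 (contr_edges EM D2) f2"
    and i2: "inj_on f2 A" using m1 unfolding is_minor_def by blast
  define F where "F d = \<Union>(f1 ` d)" for d
  define D where "D = F ` D2"
  have f1D: "u \<in> VM \<Longrightarrow> f1 u \<in> D1" for u using h1 unfolding graph_hom_def by blast
  have D1ne: "d \<in> D1 \<Longrightarrow> d \<noteq> {} \<and> d \<subseteq> V \<and> induces_connected E d" for d
    using bs1 unfolding branch_sets_def by blast
  have D1dis: "d \<in> D1 \<Longrightarrow> e \<in> D1 \<Longrightarrow> d \<noteq> e \<Longrightarrow> d \<inter> e = {}" for d e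
    using bs1 unfolding branch_sets_def by blast
  have D2ne: "d \<in> D2 \<Longrightarrow> d \<noteq> {} \<and> d \<subseteq> VM \<and> induces_connected EM d" for d
    using bs2 unfolding branch_sets_def by blast
  have D2dis: "d \<in> D2 \<Longrightarrow> e \<in> D2 \<Longrightarrow> d \<noteq> e \<Longrightarrow> d \<inter> e = {}" for d e
    using bs2 unfolding branch_sets_def by blast
  have f1edge: "connected_to E (f1 u) (f1 v)" if uv: "{u,v} \<in> EM" for u v
  proof -
    have "{f1 u, f1 v} \<in> contr_edges E D1" using h1 uv unfolding graph_hom_def by blast
    then show ?thesis using contr_edgesD[of "f1 u" "f1 v" E D1] by blast
  qed
  have Fne: "F d \<noteq> {}" if dD2: "d \<in> D2" for d
  proof -
    obtain u where "u \<in> d" using D2ne[OF dD2] by blast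
    then have "u \<in> VM" using D2ne[OF dD2] by blast
    then have "f1 u \<noteq> {}" using f1D D1ne by blast
    then show ?thesis using \<open>u \<in> d\<close> unfolding F_def by blast
  qed
  have FV: "F d \<subseteq> V" if "d \<in> D2" for d
    using D2ne[OF that] f1D D1ne unfolding F_def by blast
  have Fdis: "F d \<inter> F e = {}" if de: "d \<in> D2" "e \<in> D2" "d \<noteq> e" for d e
  proof (rule ccontr)
    assume "F d \<inter> F e \<noteq> {}"
    then obtain x u v where "u \<in> d" "v \<in> e" "x \<in> f1 u" "x \<in> f1 v" unfolding F_def by blast
    moreover have "u \<noteq> v" using D2dis[OF de] calculation by blast
    moreover have "u \<in> VM" "v \<in> VM" using D2ne de calculation by blast+
    moreover have "f1 u \<noteq> f1 v" using inj_onD[OF i1, of u v] calculation by blast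
    ultimately show False using D1dis f1D by blast
  qed
  have Finj: "inj_on F D2"
  proof (rule inj_onI)
    fix d e assume "d \<in> D2" "e \<in> D2" "F d = F e"
    then show "d = e" using Fdis[of d e] Fne[of d] by auto
  qed
  have Fconn: "induces_connected E (F d)" if dD: "d \<in> D2" for d
  proof -
    let ?R = "{(u,v). u \<in> F d \<and> v \<in> F d \<and> {u,v} \<in> E}"
    let ?Rd = "{(u,v). u \<in> d \<and> v \<in> d \<and> {u,v} \<in> EM}"
    have dsub: "d \<subseteq> VM" using D2ne[OF dD] by blast
    have dconn: "\<forall>u\<in>d. \<forall>v\<in>d. (u,v) \<in> ?Rd\<^sup>*" using D2ne[OF dD] unfolding induces_connected_def by blast
    have within: "(x,y) \<in> ?R\<^sup>*" if "u \<in> d" "x \<in> f1 u" "y \<in> f1 u" for u x y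
    proof -
      have "induces_connected E (f1 u)" using D1ne f1D dsub that(1) by blast
      then have c1: "(x,y) \<in> {(a,b). a \<in> f1 u \<and> b \<in> f1 u \<and> {a,b} \<in> E}\<^sup>*"
        using that(2,3) unfolding induces_connected_def by blast
      have s1: "f1 u \<subseteq> F d" using that(1) unfolding F_def by blast
      show ?thesis by (rule conn_lift[OF s1 c1])
    qed
    have main: "\<forall>x\<in>f1 u. \<forall>y\<in>f1 v. (x,y) \<in> ?R\<^sup>*" if "(u,v) \<in> ?Rd\<^sup>*" "u \<in> d" for u v
      using that(1)
    proof (induction rule: rtrancl_induct)
      case base
      then show ?case using within that(2) by blast
    next
      case (step v w)
      show ?case
      proof (intro ballI)
        fix x y assume x: "x \<in> f1 u" and y: "y \<in> f1 w"
        have vw: "v \<in> d" "w \<in> d" "{v,w} \<in> EM" using step(2) by auto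
        obtain s t where st: "s \<in> f1 v" "t \<in> f1 w" "{s,t} \<in> E"
          using f1edge[OF vw(3)] unfolding connected_to_def by blast
        have "(x,s) \<in> ?R\<^sup>*" using step.IH x st(1) by blast
        moreover have "(s,t) \<in> ?R" using st vw unfolding F_def by blast
        moreover have "(t,y) \<in> ?R\<^sup>*" using within vw(2) st(2) y by blast
        ultimately show "(x,y) \<in> ?R\<^sup>*" by (meson rtrancl_into_rtrancl rtrancl_trans)
      qed
    qed
    show ?thesis unfolding induces_connected_def
    proof (intro ballI)
      fix x y assume "x \<in> F d" "y \<in> F d"
      then obtain u v where "u \<in> d" "v \<in> d" "x \<in> f1 u" "y \<in> f1 v" unfolding F_def by blast
      then show "(x,y) \<in> ?R\<^sup>*" using main dconn by blast
    qed
  qed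
  have Fcto: "connected_to E (F d) (F e)" if cde: "connected_to EM d e" for d e
  proof -
    obtain p q where "p \<in> d" "q \<in> e" "{p,q} \<in> EM" using cde unfolding connected_to_def by blast
    moreover obtain s t where "s \<in> f1 p" "t \<in> f1 q" "{s,t} \<in> E"
      using f1edge[OF calculation(3)] unfolding connected_to_def by blast
    ultimately show ?thesis unfolding connected_to_def F_def by blast
  qed
  have "branch_sets V E D"
    unfolding branch_sets_def D_def using Fne FV Fconn Fdis by blast
  moreover have "graph_hom A B D (contr_edges E D) (F \<circ> f2)"
    unfolding graph_hom_def
  proof safe
    fix a assume "a \<in> A" then show "(F \<circ> f2) a \<in> D" using h2 unfolding graph_hom_def D_def by auto
  next
    fix a b assume "{a,b} \<in> B"
    then have "{f2 a, f2 b} \<in> contr_edges EM D2" using h2 unfolding graph_hom_def by blast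
    then have c: "f2 a \<in> D2" "f2 b \<in> D2" "f2 a \<noteq> f2 b" "connected_to EM (f2 a) (f2 b)"
      using contr_edgesD[of "f2 a" "f2 b" EM D2] by blast+
    then have "F (f2 a) \<noteq> F (f2 b)" using inj_onD[OF Finj, of "f2 a" "f2 b"] by blast
    then show "{(F \<circ> f2) a, (F \<circ> f2) b} \<in> contr_edges E D"
      using c Fcto unfolding D_def by (auto intro!: contr_edgesI)
  qed
  moreover have "inj_on (F \<circ> f2) A"
  proof (rule comp_inj_on[OF i2])
    have "f2 ` A \<subseteq> D2" using h2 unfolding graph_hom_def by blast
    then show "inj_on F (f2 ` A)" using Finj inj_on_subset by blast
  qed
  ultimately show ?thesis unfolding is_minor_def by blast
qed



lemma minor_smaller:
  assumes fg: "finite_graph V E" and sg: "simple_graph VM EM" and mn: "is_minor VM EM V E"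
    and ni: "\<not> graph_iso VM EM V E"
  shows "finite_graph VM EM \<and> card VM + card EM < card V + card E"
proof -
  obtain D f where bs: "branch_sets V E D" and hom: "graph_hom VM EM D (contr_edges E D) f"
    and inj: "inj_on f VM" using mn unfolding is_minor_def by blast
  have finV: "finite V" and sgV: "simple_graph V E" using fg unfolding finite_graph_def by auto
  have finE: "finite E" using finite_edges[OF fg] .
  have fD: "v \<in> VM \<Longrightarrow> f v \<in> D" for v using hom unfolding graph_hom_def by blast
  have Dne: "d \<in> D \<Longrightarrow> d \<noteq> {} \<and> d \<subseteq> V" for d using bs unfolding branch_sets_def by blast
  have Ddis: "d \<in> D \<Longrightarrow> e \<in> D \<Longrightarrow> d \<inter> e \<noteq> {} \<Longrightarrow> d = e" for d e
    using bs unfolding branch_sets_def by blast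
  have sameD: "u \<in> VM \<Longrightarrow> v \<in> VM \<Longrightarrow> z \<in> f u \<Longrightarrow> z \<in> f v \<Longrightarrow> u = v" for u v z
  proof -
    assume a: "u \<in> VM" "v \<in> VM" "z \<in> f u" "z \<in> f v"
    then have "f u = f v" using Ddis fD by blast
    then show "u = v" using inj_onD[OF inj, of u v] a by blast
  qed
  define h where "h v = (SOME x. x \<in> f v)" for v
  have hin: "v \<in> VM \<Longrightarrow> h v \<in> f v" for v
    unfolding h_def using Dne[OF fD] by (metis ex_in_conv someI_ex)
  have hV: "h ` VM \<subseteq> V" using hin fD Dne by blast
  have hinj: "inj_on h VM"
  proof (rule inj_onI)
    fix u v assume "u \<in> VM" "v \<in> VM" "h u = h v"
    then show "u = v" using hin[of u] hin[of v] sameD[of u v "h u"] by simp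
  qed
  have finVM: "finite VM" using inj_on_finite[OF hinj hV finV] .
  have cVM: "card VM \<le> card V" using card_inj_on_le[OF hinj hV finV] .
  have finEM: "finite EM"
  proof -
    have "EM \<subseteq> Pow VM" using sg unfolding simple_graph_def by blast
    then show ?thesis using finVM finite_subset by blast
  qed
  have fgM: "finite_graph VM EM" using sg finVM unfolding finite_graph_def by blast
  define P where "P e p \<longleftrightarrow> p \<in> E \<and> (\<exists>x y. e = {x,y} \<and> x \<in> VM \<and> y \<in> VM \<and> (\<exists>s\<in>f x. \<exists>t\<in>f y. p = {s,t}))" for e p
  define w where "w e = (SOME p. P e p)" for e
  have Pex: "\<exists>p. P e p" if eEM: "e \<in> EM" for e
  proof -
    obtain x y where xy: "e = {x,y}" "x \<in> VM" "y \<in> VM" "x \<noteq> y" using simpleD[OF sg eEM] by blast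
    have "{f x, f y} \<in> contr_edges E D" using hom eEM xy unfolding graph_hom_def by blast
    then have "connected_to E (f x) (f y)" using contr_edgesD[of "f x" "f y" E D] by blast
    then obtain s t where "s \<in> f x" "t \<in> f y" "{s,t} \<in> E" unfolding connected_to_def by blast
    then show ?thesis unfolding P_def using xy by blast
  qed
  have Pw: "e \<in> EM \<Longrightarrow> P e (w e)" for e unfolding w_def using Pex someI_ex by metis
  have wE: "w ` EM \<subseteq> E" using Pw unfolding P_def by blast
  have wchar: "e = {u \<in> VM. f u \<inter> w e \<noteq> {}}" if eEM: "e \<in> EM" for e
  proof -
    obtain x y s t where xy: "e = {x,y}" "x \<in> VM" "y \<in> VM" "s \<in> f x" "t \<in> f y" "w e = {s,t}"
      using Pw[OF eEM] unfolding P_def by blast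
    show ?thesis
    proof
      show "e \<subseteq> {u \<in> VM. f u \<inter> w e \<noteq> {}}" using xy by blast
      show "{u \<in> VM. f u \<inter> w e \<noteq> {}} \<subseteq> e"
      proof
        fix u assume "u \<in> {u \<in> VM. f u \<inter> w e \<noteq> {}}"
        then have u: "u \<in> VM" "s \<in> f u \<or> t \<in> f u" using xy by auto
        then have "u = x \<or> u = y" using sameD xy by blast
        then show "u \<in> e" using xy by blast
      qed
    qed
  qed
  have winj: "inj_on w EM"
  proof (rule inj_onI)
    fix e e' assume "e \<in> EM" "e' \<in> EM" "w e = w e'"
    then show "e = e'" using wchar[of e] wchar[of e'] by simp
  qed
  have cEM: "card EM \<le> card E" using card_inj_on_le[OF winj wE finE] .
  have ?thesis if "\<not> (card VM + card EM < card V + card E)"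
  proof -
    have eqV: "card VM = card V" and eqE: "card EM = card E" using that cVM cEM by auto
    have hVeq: "h ` VM = V"
      using card_subset_eq[OF finV hV] card_image[OF hinj] eqV by simp
    have fsing: "f v = {h v}" if vVM: "v \<in> VM" for v
    proof
      show "f v \<subseteq> {h v}"
      proof
        fix z assume z: "z \<in> f v"
        then have "z \<in> V" using Dne fD vVM by blast
        then obtain u where "u \<in> VM" "z = h u" using hVeq by blast
        then have "u = v" using sameD hin z vVM by blast
        then show "z \<in> {h v}" using \<open>z = h u\<close> by simp
      qed
      show "{h v} \<subseteq> f v" using hin vVM by blast
    qed
    have wh: "w e = h ` e" if eEM: "e \<in> EM" for e
    proof -
      obtain x y s t where xy: "e = {x,y}" "x \<in> VM" "y \<in> VM" "s \<in> f x" "t \<in> f y" "w e = {s,t}"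
        using Pw[OF eEM] unfolding P_def by blast
      then show ?thesis using fsing by auto
    qed
    have wEeq: "w ` EM = E"
      using card_subset_eq[OF finE wE] card_image[OF winj] eqE by simp
    have "graph_iso VM EM V E"
      unfolding graph_iso_def
    proof (intro exI conjI ballI)
      show "bij_betw h VM V" using hinj hVeq unfolding bij_betw_def by blast
    next
      fix x y assume xy: "x \<in> VM" "y \<in> VM"
      show "{x, y} \<in> EM \<longleftrightarrow> {h x, h y} \<in> E"
      proof
        assume xyE: "{x,y} \<in> EM"
        have "w {x,y} = {h x, h y}" using wh[OF xyE] by simp
        moreover have "w {x,y} \<in> E" using wE xyE by blast
        ultimately show "{h x, h y} \<in> E" by simp
      next
        assume "{h x, h y} \<in> E"
        then have "{h x, h y} \<in> w ` EM" using wEeq by simp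
        then obtain e where e: "e \<in> EM" "w e = {h x, h y}" by (elim imageE) simp
        then have "h ` e = h ` {x,y}" using wh[OF e(1)] by simp
        moreover have "e \<subseteq> VM" using e(1) simpleD[OF sg] by blast
        moreover have "{x,y} \<subseteq> VM" using xy by simp
        ultimately have "e = {x,y}" using inj_on_image_eq_iff[OF hinj] by blast
        then show "{x,y} \<in> EM" using e by simp
      qed
    qed
    then show ?thesis using ni by blast
  qed
  then show ?thesis using fgM by blast
qed

theorem mainTheorem2:
  shows "(\<forall>(V :: nat set) E. finite_graph V E \<longrightarrow>
            is_minor (K_verts (chromatic_number V E)) (K_edges (chromatic_number V E)) V E)
     \<longleftrightarrow>
         (\<forall>(V :: nat set) E. finite_graph V E \<and> \<not> complete_graph V E \<longrightarrow>
            (\<exists>(VM :: nat set) EM. simple_graph VM EM \<and> is_minor VM EM V E \<and>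
                \<not> graph_iso VM EM V E \<and> (\<exists>f. graph_hom V E VM EM f)))"
proof
  assume H: "\<forall>(V :: nat set) E. finite_graph V E \<longrightarrow>
            is_minor (K_verts (chromatic_number V E)) (K_edges (chromatic_number V E)) V E"
  show "\<forall>(V :: nat set) E. finite_graph V E \<and> \<not> complete_graph V E \<longrightarrow>
            (\<exists>(VM :: nat set) EM. simple_graph VM EM \<and> is_minor VM EM V E \<and>
                \<not> graph_iso VM EM V E \<and> (\<exists>f. graph_hom V E VM EM f))"
  proof (intro allI impI)
    fix V :: "nat set" and E assume a: "finite_graph V E \<and> \<not> complete_graph V E"
    let ?k = "chromatic_number V E"
    have lt: "?k < card V" using chrom_lt_card a by blast
    have "simple_graph (K_verts ?k) (K_edges ?k)"
      unfolding simple_graph_def K_verts_def K_edges_def by blast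
    moreover have "is_minor (K_verts ?k) (K_edges ?k) V E" using H a by blast
    moreover have "\<not> graph_iso (K_verts ?k) (K_edges ?k) V E"
    proof
      assume "graph_iso (K_verts ?k) (K_edges ?k) V E"
      then obtain g where "bij_betw g (K_verts ?k) V" unfolding graph_iso_def by blast
      then have "card (K_verts ?k) = card V" by (rule bij_betw_same_card)
      then show False using lt unfolding K_verts_def by simp
    qed
    moreover have "\<exists>f. graph_hom V E (K_verts ?k) (K_edges ?k) f" using chrom_hom a by blast
    ultimately show "\<exists>(VM :: nat set) EM. simple_graph VM EM \<and> is_minor VM EM V E \<and>
                \<not> graph_iso VM EM V E \<and> (\<exists>f. graph_hom V E VM EM f)" by blast
  qed
next
  assume H: "\<forall>(V :: nat set) E. finite_graph V E \<and> \<not> complete_graph V E \<longrightarrow>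
            (\<exists>(VM :: nat set) EM. simple_graph VM EM \<and> is_minor VM EM V E \<and>
                \<not> graph_iso VM EM V E \<and> (\<exists>f. graph_hom V E VM EM f))"
  have "\<forall>(V :: nat set) E. finite_graph V E \<longrightarrow> card V + card E = n \<longrightarrow>
            is_minor (K_verts (chromatic_number V E)) (K_edges (chromatic_number V E)) V E" for n
  proof (induction n rule: less_induct)
    case (less n)
    show ?case
    proof (intro allI impI)
      fix V :: "nat set" and E assume fg: "finite_graph V E" and cn: "card V + card E = n"
      show "is_minor (K_verts (chromatic_number V E)) (K_edges (chromatic_number V E)) V E"
      proof (cases "complete_graph V E")
        case True
        then show ?thesis using complete_K_minor[OF fg True] chrom_le_card[OF fg] K_minor_mono by blast
      next
        case False
        then obtain VM :: "nat set" and EM f where M: "simple_graph VM EM" "is_minor VM EM V E"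
          "\<not> graph_iso VM EM V E" "graph_hom V E VM EM f"
          using H fg by blast
        have sm: "finite_graph VM EM" "card VM + card EM < card V + card E"
          using minor_smaller[OF fg M(1) M(2) M(3)] by auto
        have IH: "is_minor (K_verts (chromatic_number VM EM)) (K_edges (chromatic_number VM EM)) VM EM"
          using less sm cn by blast
        have m1: "is_minor (K_verts (chromatic_number VM EM)) (K_edges (chromatic_number VM EM)) V E"
          using minor_trans[OF IH M(2)] .
        obtain g where g: "graph_hom VM EM (K_verts (chromatic_number VM EM)) (K_edges (chromatic_number VM EM)) g"
          using chrom_hom[OF sm(1)] by blast
        have "chromatic_number V E \<le> chromatic_number VM EM"
          using chrom_le[OF hom_comp[OF M(4) g]] .
        then show ?thesis using K_minor_mono m1 by blast
      qed
    qed
  qed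
  then show "\<forall>(V :: nat set) E. finite_graph V E \<longrightarrow>
            is_minor (K_verts (chromatic_number V E)) (K_edges (chromatic_number V E)) V E" by blast
qed

end
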